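(* For each finite $C$-group $(G,Y)$ there is a constant $T\in\mathbb N$ such that if $s_1,s_2\in S(G,Y)^G$ satisfy $\tau_i(s_1)\ge T$ for $i=1,\dots,m$ and $\alpha_G(s_1)=\alpha_G(s_2)$, then $s_1=s_2$.
   Context: A $C$-group is a pair $(G,Y)$, $G$ a group, $Y\subset G$ a union of finitely many conjugacy classes with $1\notin Y$, such that $G$ has a presentation with generators the elements of $Y$ and defining relations all of the form $z^{-1}yz=y'$ ($y,y',z\in Y$); it is finite if $Y$ is finite. Write $Y=C_1\sqcup\dots\sqcup C_m$ as its decomposition into conjugacy classes of $G$. The factorization semigroup $S(G,Y)$ is generated by symbols $x_y$, $y\in Y$, subject to $x_{g_1}x_{g_2}=x_{g_2}x_{g_2^{-1}g_1g_2}=x_{g_1g_2g_1^{-1}}x_{g_1}$ ($g_1,g_2\in Y$); $\alpha_G:S(G,Y)\to G$, $x_y\mapsto y$. For $s=x_{g_1}\cdots x_{g_n}$, $G_s$ is the subgroup generated by $g_1,\dots,g_n$ (independent of the expression), and $S(G,Y)^G=\{s:G_s=G\}$. $\tau_i(s)$ denotes the number of factors $x_y$ of $s$ with $y\in C_i$. *)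

theory Defs
  imports "HOL-Algebra.Algebra"
begin

text \<open>Words in the generators and their inverses: (y, True) stands for y, (y, False) for y^-1.\<close>

definition word_eval :: "('a, 'b) monoid_scheme \<Rightarrow> ('a \<times> bool) list \<Rightarrow> 'a" where
  "word_eval G w = foldr (\<lambda>(y, e) acc. (if e then y else inv\<^bsub>G\<^esub> y) \<otimes>\<^bsub>G\<^esub> acc) w \<one>\<^bsub>G\<^esub>"

inductive pres_eq :: "'a set \<Rightarrow> ('a \<times> 'a \<times> 'a) set \<Rightarrow> ('a \<times> bool) list \<Rightarrow> ('a \<times> bool) list \<Rightarrow> bool"
  for Y R where
  pres_refl: "pres_eq Y R w w"
| pres_sym: "pres_eq Y R w1 w2 \<Longrightarrow> pres_eq Y R w2 w1"
| pres_trans: "pres_eq Y R w1 w2 \<Longrightarrow> pres_eq Y R w2 w3 \<Longrightarrow> pres_eq Y R w1 w3"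
| pres_cancel: "y \<in> Y \<Longrightarrow> pres_eq Y R (u @ [(y, e), (y, \<not> e)] @ v) (u @ v)"
| pres_rel: "(y, y', z) \<in> R \<Longrightarrow>
    pres_eq Y R (u @ [(z, False), (y, True), (z, True)] @ v) (u @ [(y', True)] @ v)"

definition presents :: "('a, 'b) monoid_scheme \<Rightarrow> 'a set \<Rightarrow> ('a \<times> 'a \<times> 'a) set \<Rightarrow> bool" where
  "presents G Y R \<longleftrightarrow>
     (\<forall>g \<in> carrier G. \<exists>w \<in> lists (Y \<times> UNIV). word_eval G w = g) \<and>
     (\<forall>w1 \<in> lists (Y \<times> UNIV). \<forall>w2 \<in> lists (Y \<times> UNIV).
        word_eval G w1 = word_eval G w2 \<longleftrightarrow> pres_eq Y R w1 w2)"

definition finite_C_group :: "('a, 'b) monoid_scheme \<Rightarrow> 'a set \<Rightarrow> bool" where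
  "finite_C_group G Y \<longleftrightarrow>
     group G \<and> Y \<subseteq> carrier G \<and> finite Y \<and> \<one>\<^bsub>G\<^esub> \<notin> Y \<and>
     (\<forall>g \<in> carrier G. \<forall>y \<in> Y. inv\<^bsub>G\<^esub> g \<otimes>\<^bsub>G\<^esub> y \<otimes>\<^bsub>G\<^esub> g \<in> Y) \<and>
     (\<exists>R. R \<subseteq> {(y, y', z). y \<in> Y \<and> y' \<in> Y \<and> z \<in> Y \<and>
                              inv\<^bsub>G\<^esub> z \<otimes>\<^bsub>G\<^esub> y \<otimes>\<^bsub>G\<^esub> z = y'}
          \<and> presents G Y R)"

definition conj_class :: "('a, 'b) monoid_scheme \<Rightarrow> 'a \<Rightarrow> 'a set" where
  "conj_class G y = {inv\<^bsub>G\<^esub> g \<otimes>\<^bsub>G\<^esub> y \<otimes>\<^bsub>G\<^esub> g | g. g \<in> carrier G}"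

definition classes_of :: "('a, 'b) monoid_scheme \<Rightarrow> 'a set \<Rightarrow> 'a set set" where
  "classes_of G Y = conj_class G ` Y"

text \<open>Elements of S(G,Y) are represented by words x_{g_1} ... x_{g_n} (lists over Y);
  two words represent the same element iff related by the congruence generated by
  x_{g1} x_{g2} = x_{g2} x_{g2^-1 g1 g2} = x_{g1 g2 g1^-1} x_{g1}.\<close>

inductive hurwitz_step :: "('a, 'b) monoid_scheme \<Rightarrow> 'a list \<Rightarrow> 'a list \<Rightarrow> bool" for G where
  hs1: "hurwitz_step G (u @ [a, b] @ v) (u @ [b, inv\<^bsub>G\<^esub> b \<otimes>\<^bsub>G\<^esub> a \<otimes>\<^bsub>G\<^esub> b] @ v)"
| hs2: "hurwitz_step G (u @ [a, b] @ v) (u @ [a \<otimes>\<^bsub>G\<^esub> b \<otimes>\<^bsub>G\<^esub> inv\<^bsub>G\<^esub> a, a] @ v)"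

definition fact_eq :: "('a, 'b) monoid_scheme \<Rightarrow> 'a list \<Rightarrow> 'a list \<Rightarrow> bool" where
  "fact_eq G = equivclp (hurwitz_step G)"

definition alpha :: "('a, 'b) monoid_scheme \<Rightarrow> 'a list \<Rightarrow> 'a" where
  "alpha G w = foldr (\<lambda>y acc. y \<otimes>\<^bsub>G\<^esub> acc) w \<one>\<^bsub>G\<^esub>"

definition G_sub :: "('a, 'b) monoid_scheme \<Rightarrow> 'a list \<Rightarrow> 'a set" where
  "G_sub G w = generate G (set w)"

definition tau :: "'a set \<Rightarrow> 'a list \<Rightarrow> nat" where
  "tau C w = length (filter (\<lambda>y. y \<in> C) w)"

end

theory Submission
  imports Defs
begin

abbreviation hs where "hs G \<equiv> (hurwitz_step G)\<^sup>*\<^sup>*"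

lemma hstep_ctx: "hurwitz_step G u v \<Longrightarrow> hurwitz_step G (p@u@q) (p@v@q)"
proof (induction rule: hurwitz_step.induct)
  case (hs1 u a b v)
  show ?case using hurwitz_step.hs1[of G "p@u" a b "v@q"] by simp
next
  case (hs2 u a b v)
  show ?case using hurwitz_step.hs2[of G "p@u" a b "v@q"] by simp
qed

lemma hs_ctx: "hs G u v \<Longrightarrow> hs G (p@u@q) (p@v@q)"
proof (induction rule: rtranclp_induct)
  case base then show ?case by simp
next
  case (step y z) then show ?case
    by (meson hstep_ctx rtranclp.rtrancl_into_rtrancl)
qed

lemma hs_cons: "hs G u v \<Longrightarrow> hs G (x#u) (x#v)"
  using hs_ctx[of G u v "[x]" "[]"] by simp

lemma hs_app_left: "hs G u v \<Longrightarrow> hs G (p@u) (p@v)"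
  using hs_ctx[of G u v p "[]"] by simp

lemma hs_app_right: "hs G u v \<Longrightarrow> hs G (u@q) (v@q)"
  using hs_ctx[of G u v "[]" q] by simp

lemma move_left: "hs G (a@[b]) ([b] @ map (\<lambda>x. inv\<^bsub>G\<^esub> b \<otimes>\<^bsub>G\<^esub> x \<otimes>\<^bsub>G\<^esub> b) a)"
proof (induction a)
  case Nil then show ?case by simp
next
  case (Cons x a)
  have "hs G ((x#a)@[b]) (x # b # map (\<lambda>x. inv\<^bsub>G\<^esub> b \<otimes>\<^bsub>G\<^esub> x \<otimes>\<^bsub>G\<^esub> b) a)"
    using hs_cons[OF Cons.IH] by simp
  moreover have "hurwitz_step G (x # b # map (\<lambda>x. inv\<^bsub>G\<^esub> b \<otimes>\<^bsub>G\<^esub> x \<otimes>\<^bsub>G\<^esub> b) a)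
      ([b] @ map (\<lambda>x. inv\<^bsub>G\<^esub> b \<otimes>\<^bsub>G\<^esub> x \<otimes>\<^bsub>G\<^esub> b) (x#a))"
    using hurwitz_step.hs1[of G "[]" x b "map (\<lambda>x. inv\<^bsub>G\<^esub> b \<otimes>\<^bsub>G\<^esub> x \<otimes>\<^bsub>G\<^esub> b) a"] by simp
  ultimately show ?case by (meson rtranclp.rtrancl_into_rtrancl)
qed

lemma move_right: "hs G ([a]@t) (map (\<lambda>x. a \<otimes>\<^bsub>G\<^esub> x \<otimes>\<^bsub>G\<^esub> inv\<^bsub>G\<^esub> a) t @ [a])"
proof (induction t)
  case Nil then show ?case by simp
next
  case (Cons x t)
  have "hurwitz_step G ([a]@(x#t)) ((a \<otimes>\<^bsub>G\<^esub> x \<otimes>\<^bsub>G\<^esub> inv\<^bsub>G\<^esub> a) # a # t)"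
    using hurwitz_step.hs2[of G "[]" a x t] by simp
  moreover have "hs G ((a \<otimes>\<^bsub>G\<^esub> x \<otimes>\<^bsub>G\<^esub> inv\<^bsub>G\<^esub> a) # a # t)
     (map (\<lambda>x. a \<otimes>\<^bsub>G\<^esub> x \<otimes>\<^bsub>G\<^esub> inv\<^bsub>G\<^esub> a) (x#t) @ [a])"
    using hs_cons[OF Cons.IH] by simp
  ultimately show ?case by (meson converse_rtranclp_into_rtranclp)
qed


context group begin

lemma alpha_closed: "set a \<subseteq> carrier G \<Longrightarrow> alpha G a \<in> carrier G"
  by (induction a) (auto simp: alpha_def)

lemma alpha_append: "set a \<subseteq> carrier G \<Longrightarrow> set b \<subseteq> carrier G \<Longrightarrow> alpha G (a@b) = alpha G a \<otimes> alpha G b"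
  by (induction a) (auto simp: alpha_def m_assoc alpha_closed[unfolded alpha_def])

lemma alpha_Cons: "alpha G (x#a) = x \<otimes> alpha G a"
  by (simp add: alpha_def)

lemma alpha_replicate: "y \<in> carrier G \<Longrightarrow> alpha G (replicate n y) = y [^] n"
proof (induction n)
  case (Suc n) then show ?case using nat_pow_Suc2[of y n] by (simp add: alpha_Cons)
qed (simp add: alpha_def)

lemma block_right:
  assumes "set Xs \<subseteq> carrier G" "set t \<subseteq> carrier G"
  shows "hs G (Xs@t) (map (\<lambda>x. alpha G Xs \<otimes> x \<otimes> inv (alpha G Xs)) t @ Xs)"
  using assms
proof (induction Xs arbitrary: t)
  case Nil then show ?case by (subst map_idI) (auto simp: alpha_def)
next
  case (Cons z Xs)
  have z: "z \<in> carrier G" and Xs: "set Xs \<subseteq> carrier G" using Cons by auto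
  have aX: "alpha G Xs \<in> carrier G" using alpha_closed[OF Xs] .
  have 1: "hs G ((z#Xs)@t) (z # map (\<lambda>x. alpha G Xs \<otimes> x \<otimes> inv (alpha G Xs)) t @ Xs)"
    using hs_cons[OF Cons.IH[OF Xs Cons.prems(2)]] by simp
  have 2: "hs G ([z] @ map (\<lambda>x. alpha G Xs \<otimes> x \<otimes> inv (alpha G Xs)) t)
     (map (\<lambda>x. z \<otimes> x \<otimes> inv z) (map (\<lambda>x. alpha G Xs \<otimes> x \<otimes> inv (alpha G Xs)) t) @ [z])"
    by (rule move_right)
  have eq: "map (\<lambda>x. z \<otimes> x \<otimes> inv z) (map (\<lambda>x. alpha G Xs \<otimes> x \<otimes> inv (alpha G Xs)) t)
        = map (\<lambda>x. alpha G (z#Xs) \<otimes> x \<otimes> inv (alpha G (z#Xs))) t"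
  proof -
    have calc: "z \<otimes> (alpha G Xs \<otimes> x \<otimes> inv (alpha G Xs)) \<otimes> inv z
          = (z \<otimes> alpha G Xs) \<otimes> x \<otimes> inv (z \<otimes> alpha G Xs)" if x: "x \<in> carrier G" for x
        using x z aX by (simp add: m_assoc inv_mult_group)
    { fix x assume x: "x \<in> carrier G"
      have "z \<otimes> (alpha G Xs \<otimes> x \<otimes> inv (alpha G Xs)) \<otimes> inv z
          = (z \<otimes> alpha G Xs) \<otimes> x \<otimes> inv (z \<otimes> alpha G Xs)"
        using x z aX by (simp add: m_assoc inv_mult_group)
    }
    show ?thesis unfolding map_map comp_def
      by (intro map_cong refl) (use Cons.prems(2) calc in \<open>auto simp: alpha_Cons\<close>)
  qed
  have "hs G (z # map (\<lambda>x. alpha G Xs \<otimes> x \<otimes> inv (alpha G Xs)) t @ Xs)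
      (map (\<lambda>x. alpha G (z#Xs) \<otimes> x \<otimes> inv (alpha G (z#Xs))) t @ [z] @ Xs)"
    using hs_app_right[OF 2, of Xs] unfolding eq by simp
  with 1 show ?case by simp
qed

lemma central_block:
  assumes "set Xs \<subseteq> carrier G" "set t \<subseteq> carrier G"
    and c: "\<And>g. g \<in> carrier G \<Longrightarrow> alpha G Xs \<otimes> g = g \<otimes> alpha G Xs"
  shows "hs G (Xs@t) (t @ Xs)"
proof -
  have aX: "alpha G Xs \<in> carrier G" using alpha_closed[OF assms(1)] .
  have "map (\<lambda>x. alpha G Xs \<otimes> x \<otimes> inv (alpha G Xs)) t = t"
  proof (rule map_idI)
    fix x assume "x \<in> set t"
    then have x: "x \<in> carrier G" using assms(2) by auto
    show "alpha G Xs \<otimes> x \<otimes> inv (alpha G Xs) = x"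
      using c[OF x] x aX by (simp add: m_assoc)
  qed
  then show ?thesis using block_right[OF assms(1,2)] by simp
qed

end

context group begin

lemma gc1[simp]: "g \<in> carrier G \<Longrightarrow> x \<in> carrier G \<Longrightarrow> g \<otimes> (inv g \<otimes> x) = x"
  by (simp add: m_assoc[symmetric])
lemma gc2[simp]: "g \<in> carrier G \<Longrightarrow> x \<in> carrier G \<Longrightarrow> inv g \<otimes> (g \<otimes> x) = x"
  by (simp add: m_assoc[symmetric])

lemma gen_eqI:
  assumes "A \<subseteq> carrier G" "B \<subseteq> carrier G" "A \<subseteq> generate G B" "B \<subseteq> generate G A"
  shows "generate G A = generate G B"
  using generate_subgroup_incl[OF assms(3) generate_is_subgroup[OF assms(2)]]
        generate_subgroup_incl[OF assms(4) generate_is_subgroup[OF assms(1)]] by blast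

lemma conj_class_conj:
  assumes "x \<in> carrier G" "g \<in> carrier G" "y \<in> carrier G"
  shows "(inv g \<otimes> x \<otimes> g \<in> conj_class G y) = (x \<in> conj_class G y)"
proof
  assume "x \<in> conj_class G y"
  then obtain h where h: "h \<in> carrier G" "x = inv h \<otimes> y \<otimes> h" by (auto simp: conj_class_def)
  have "inv g \<otimes> x \<otimes> g = inv (h \<otimes> g) \<otimes> y \<otimes> (h \<otimes> g)"
    using h assms by (simp add: m_assoc inv_mult_group)
  then show "inv g \<otimes> x \<otimes> g \<in> conj_class G y" using h assms by (auto simp: conj_class_def)
next
  assume "inv g \<otimes> x \<otimes> g \<in> conj_class G y"
  then obtain h where h: "h \<in> carrier G" "inv g \<otimes> x \<otimes> g = inv h \<otimes> y \<otimes> h" by (auto simp: conj_class_def)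
  have "x = g \<otimes> (inv g \<otimes> x \<otimes> g) \<otimes> inv g"
    using assms by (simp add: m_assoc)
  also have "\<dots> = inv (h \<otimes> inv g) \<otimes> y \<otimes> (h \<otimes> inv g)"
    using h assms by (simp add: m_assoc inv_mult_group)
  finally show "x \<in> conj_class G y" using h assms by (auto simp: conj_class_def)
qed

lemma conj_class_conj2:
  assumes "x \<in> carrier G" "g \<in> carrier G" "y \<in> carrier G"
  shows "(g \<otimes> x \<otimes> inv g \<in> conj_class G y) = (x \<in> conj_class G y)"
  using conj_class_conj[of x "inv g" y] assms by simp

lemma conj_class_self: "y \<in> carrier G \<Longrightarrow> y \<in> conj_class G y"
  unfolding conj_class_def by (rule CollectI, rule exI[of _ "\<one>"]) auto

lemma conj_class_sub_carrier: "y \<in> carrier G \<Longrightarrow> conj_class G y \<subseteq> carrier G"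
  unfolding conj_class_def by auto

lemma conj_class_eq:
  assumes "y \<in> carrier G" "y' \<in> carrier G" "x \<in> conj_class G y" "x \<in> conj_class G y'"
  shows "conj_class G y = conj_class G y'"
proof -
  have "z \<in> conj_class G y \<longleftrightarrow> z \<in> conj_class G y'" for z
  proof -
    { fix y y' assume yy: "y \<in> carrier G" "y' \<in> carrier G" "x \<in> conj_class G y" "x \<in> conj_class G y'"
       and z: "z \<in> conj_class G y"
      obtain h where h: "h \<in> carrier G" "z = inv h \<otimes> y \<otimes> h" using z by (auto simp: conj_class_def)
      obtain k where k: "k \<in> carrier G" "x = inv k \<otimes> y \<otimes> k" using yy by (auto simp: conj_class_def)
      have xc: "x \<in> carrier G" using k yy by simp
      have "z = inv (inv k \<otimes> h) \<otimes> x \<otimes> (inv k \<otimes> h)"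
        using h k yy by (simp add: m_assoc inv_mult_group)
      then have "z \<in> conj_class G y'" using conj_class_conj[OF xc _ yy(2), of "inv k \<otimes> h"] yy h k by simp
    }
    then show ?thesis using assms by blast
  qed
  then show ?thesis by blast
qed

end

locale cgrp = group G for G :: "('a, 'b) monoid_scheme" (structure) +
  fixes Y :: "'a set"
  assumes Ysub: "Y \<subseteq> carrier G" and finY: "finite Y"
    and Yconj: "\<And>g y. g \<in> carrier G \<Longrightarrow> y \<in> Y \<Longrightarrow> inv g \<otimes> y \<otimes> g \<in> Y"
    and Ygen: "generate G Y = carrier G"
begin

lemma Yc: "y \<in> Y \<Longrightarrow> y \<in> carrier G" using Ysub by auto

lemma Yconj2: "g \<in> carrier G \<Longrightarrow> y \<in> Y \<Longrightarrow> g \<otimes> y \<otimes> inv g \<in> Y"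
  using Yconj[of "inv g" y] by simp

lemma comm_gen:
  assumes a: "a \<in> carrier G" and c: "\<And>x. x \<in> Y \<Longrightarrow> a \<otimes> x = x \<otimes> a" and g: "g \<in> carrier G"
  shows "a \<otimes> g = g \<otimes> a"
proof -
  have "g \<in> generate G Y" using g Ygen by simp
  then show ?thesis
  proof (induction rule: generate.induct)
    case one then show ?case using a by simp
  next
    case (incl h) then show ?case using c by simp
  next
    case (inv h)
    have h: "h \<in> carrier G" using inv Yc by simp
    have "a \<otimes> inv h = inv h \<otimes> (h \<otimes> a) \<otimes> inv h" using a h by (simp add: m_assoc)
    also have "\<dots> = inv h \<otimes> (a \<otimes> h) \<otimes> inv h" using c[OF inv] by simp
    also have "\<dots> = inv h \<otimes> a" using a h by (simp add: m_assoc)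
    finally show ?case .
  next
    case (eng h1 h2)
    have "h1 \<in> carrier G" "h2 \<in> carrier G" using eng(1,2) generate_incl[OF Ysub] by auto
    then show ?case using eng a by (metis m_assoc)
  qed
qed

lemma comm_pow:
  assumes "a \<in> carrier G" "x \<in> carrier G" "a \<otimes> x = x \<otimes> a"
  shows "a [^] (n::nat) \<otimes> x = x \<otimes> a [^] n"
proof (induction n)
  case 0 then show ?case using assms by simp
next
  case (Suc n)
  have "a [^] Suc n \<otimes> x = a [^] n \<otimes> (a \<otimes> x)" using assms by (simp add: m_assoc)
  also have "\<dots> = (a [^] n \<otimes> x) \<otimes> a" using assms by (simp add: m_assoc)
  also have "\<dots> = x \<otimes> a [^] Suc n" using Suc assms by (simp add: m_assoc)
  finally show ?case .
qed

lemma exists_N: "\<exists>N::nat. N > 0 \<and> (\<forall>y\<in>Y. \<forall>g\<in>carrier G. y [^] N \<otimes> g = g \<otimes> y [^] N)"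
proof -
  define F where "F = (\<lambda>k::nat. \<lambda>y\<in>Y. \<lambda>x\<in>Y. inv (y [^] k) \<otimes> x \<otimes> y [^] k)"
  have "range F \<subseteq> Pi\<^sub>E Y (\<lambda>_. Pi\<^sub>E Y (\<lambda>_. Y))"
    unfolding F_def using Yconj Ysub by (auto simp: PiE_def Pi_def)
  moreover have "finite (Pi\<^sub>E Y (\<lambda>_. Pi\<^sub>E Y (\<lambda>_. Y)))" using finY by (simp add: finite_PiE)
  ultimately have "finite (range F)" by (rule finite_subset)
  then have "\<not> inj F" using finite_imageD infinite_UNIV_nat by blast
  then obtain k1 k2 where kk: "k1 \<noteq> k2" "F k1 = F k2" unfolding inj_def by blast
  then obtain k1 k2 where kk: "k1 < k2" "F k1 = F k2"
    by (metis linorder_neqE_nat)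
  define d where "d = k2 - k1"
  have d: "d > 0" using kk d_def by simp
  have cd: "y [^] d \<otimes> x = x \<otimes> y [^] d" if y: "y \<in> Y" and x: "x \<in> Y" for y x
  proof -
    have yc: "y \<in> carrier G" and xc: "x \<in> carrier G" using y x Yc by auto
    define p where "p = y [^] k1"
    define q where "q = y [^] d"
    have pc: "p \<in> carrier G" and qc: "q \<in> carrier G" using yc p_def q_def by auto
    have k2: "y [^] k2 = p \<otimes> q" using yc kk unfolding p_def q_def d_def
      by (simp add: nat_pow_mult)
    define x0 where "x0 = p \<otimes> x \<otimes> inv p"
    have x0Y: "x0 \<in> Y" unfolding x0_def using Yconj2[OF pc x] .
    have x0c: "x0 \<in> carrier G" using x0Y Yc by auto
    have "F k1 y x0 = F k2 y x0" using kk by simp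
    then have "inv (y [^] k1) \<otimes> x0 \<otimes> y [^] k1 = inv (y [^] k2) \<otimes> x0 \<otimes> y [^] k2"
      using y x0Y unfolding F_def by simp
    then have e: "inv p \<otimes> x0 \<otimes> p = inv (p \<otimes> q) \<otimes> x0 \<otimes> (p \<otimes> q)"
      by (simp only: k2 p_def[symmetric])
    have l: "inv p \<otimes> x0 \<otimes> p = x" unfolding x0_def using pc xc by (simp add: m_assoc)
    have r: "inv (p \<otimes> q) \<otimes> x0 \<otimes> (p \<otimes> q) = inv q \<otimes> x \<otimes> q"
      unfolding x0_def using pc xc qc by (simp add: m_assoc inv_mult_group)
    have "x = inv q \<otimes> x \<otimes> q" using e l r by simp
    then have "q \<otimes> x = q \<otimes> (inv q \<otimes> x \<otimes> q)" by simp
    also have "\<dots> = x \<otimes> q" using qc xc by (simp add: m_assoc[symmetric])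
    finally show ?thesis unfolding q_def .
  qed
  show ?thesis
  proof (intro exI conjI ballI)
    show "0 < d" by (rule d)
    fix y g assume y: "y \<in> Y" and g: "g \<in> carrier G"
    show "y [^] d \<otimes> g = g \<otimes> y [^] d"
      using comm_gen[of "y [^] d"] cd[OF y] y Yc g by auto
  qed
qed

definition NN :: nat where "NN = (SOME N. N > 0 \<and> (\<forall>y\<in>Y. \<forall>g\<in>carrier G. y [^] N \<otimes> g = g \<otimes> y [^] N))"

lemma NN_pos: "NN > 0" and NN_central: "y \<in> Y \<Longrightarrow> g \<in> carrier G \<Longrightarrow> y [^] NN \<otimes> g = g \<otimes> y [^] NN"
  using someI_ex[OF exists_N] unfolding NN_def[symmetric] by auto

end


context cgrp begin

lemma tau_append[simp]: "tau C (a@b) = tau C a + tau C b"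
  by (simp add: tau_def)
lemma tau_Cons[simp]: "tau C (x#a) = (if x \<in> C then 1 else 0) + tau C a"
  by (simp add: tau_def)
lemma tau_Nil[simp]: "tau C [] = 0"
  by (simp add: tau_def)

lemma hstep_inv:
  assumes "hurwitz_step G w w'" "set w \<subseteq> Y"
  shows "set w' \<subseteq> Y \<and> alpha G w' = alpha G w \<and> generate G (set w') = generate G (set w) \<and>
     (\<forall>y0\<in>carrier G. tau (conj_class G y0) w' = tau (conj_class G y0) w)"
  using assms
proof (induction rule: hurwitz_step.induct)
  case (hs1 u a b v)
  have a: "a \<in> carrier G" and b: "b \<in> carrier G" and aY: "a \<in> Y" and bY: "b \<in> Y"
    and u: "set u \<subseteq> Y" and v: "set v \<subseteq> Y" using hs1 Yc by auto
  define c where "c = inv b \<otimes> a \<otimes> b"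
  have cY: "c \<in> Y" unfolding c_def using Yconj[OF b aY] .
  have c: "c \<in> carrier G" using cY Yc by auto
  have uc: "set u \<subseteq> carrier G" and vc: "set v \<subseteq> carrier G" using u v Ysub by auto
  have 1: "set (u @ [b, c] @ v) \<subseteq> Y" using u v bY cY by auto
  have 2: "alpha G (u @ [b, c] @ v) = alpha G (u @ [a, b] @ v)"
  proof -
    have "b \<otimes> c = a \<otimes> b" unfolding c_def using a b by (simp add: m_assoc)
    then have "b \<otimes> (c \<otimes> alpha G v) = a \<otimes> (b \<otimes> alpha G v)"
      using a b c alpha_closed[OF vc] by (metis m_assoc)
    then show ?thesis using uc vc a b c by (simp add: alpha_append alpha_Cons)
  qed
  have 3: "generate G (set (u @ [b, c] @ v)) = generate G (set (u @ [a, b] @ v))"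
  proof (rule gen_eqI)
    show "set (u @ [b, c] @ v) \<subseteq> carrier G" "set (u @ [a, b] @ v) \<subseteq> carrier G"
      using uc vc a b c by auto
    have "c \<in> generate G (set (u @ [a, b] @ v))" unfolding c_def
      by (intro generate.eng generate.inv generate.incl) auto
    then show "set (u @ [b, c] @ v) \<subseteq> generate G (set (u @ [a, b] @ v))"
      by (auto intro: generate.incl)
    have ae: "a = b \<otimes> c \<otimes> inv b" unfolding c_def using a b by (simp add: m_assoc)
    have "a \<in> generate G (set (u @ [b, c] @ v))" unfolding ae
      by (intro generate.eng generate.inv generate.incl) auto
    then show "set (u @ [a, b] @ v) \<subseteq> generate G (set (u @ [b, c] @ v))"
      by (auto intro: generate.incl)
  qed
  have 4: "\<forall>y0\<in>carrier G. tau (conj_class G y0) (u @ [b, c] @ v) = tau (conj_class G y0) (u @ [a, b] @ v)"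
    using conj_class_conj[OF a b] unfolding c_def by auto
  show ?case using 1 2 3 4 unfolding c_def by blast
next
  case (hs2 u a b v)
  have a: "a \<in> carrier G" and b: "b \<in> carrier G" and aY: "a \<in> Y" and bY: "b \<in> Y"
    and u: "set u \<subseteq> Y" and v: "set v \<subseteq> Y" using hs2 Yc by auto
  define c where "c = a \<otimes> b \<otimes> inv a"
  have cY: "c \<in> Y" unfolding c_def using Yconj2[OF a bY] .
  have c: "c \<in> carrier G" using cY Yc by auto
  have uc: "set u \<subseteq> carrier G" and vc: "set v \<subseteq> carrier G" using u v Ysub by auto
  have 1: "set (u @ [c, a] @ v) \<subseteq> Y" using u v aY cY by auto
  have 2: "alpha G (u @ [c, a] @ v) = alpha G (u @ [a, b] @ v)"
  proof -
    have "c \<otimes> a = a \<otimes> b" unfolding c_def using a b by (simp add: m_assoc)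
    then have "c \<otimes> (a \<otimes> alpha G v) = a \<otimes> (b \<otimes> alpha G v)"
      using a b c alpha_closed[OF vc] by (metis m_assoc)
    then show ?thesis using uc vc a b c by (simp add: alpha_append alpha_Cons)
  qed
  have 3: "generate G (set (u @ [c, a] @ v)) = generate G (set (u @ [a, b] @ v))"
  proof (rule gen_eqI)
    show "set (u @ [c, a] @ v) \<subseteq> carrier G" "set (u @ [a, b] @ v) \<subseteq> carrier G"
      using uc vc a b c by auto
    have "c \<in> generate G (set (u @ [a, b] @ v))" unfolding c_def
      by (intro generate.eng generate.inv generate.incl) auto
    then show "set (u @ [c, a] @ v) \<subseteq> generate G (set (u @ [a, b] @ v))"
      by (auto intro: generate.incl)
    have be: "b = inv a \<otimes> c \<otimes> a" unfolding c_def using a b by (simp add: m_assoc)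
    have "b \<in> generate G (set (u @ [c, a] @ v))" unfolding be
      by (intro generate.eng generate.inv generate.incl) auto
    then show "set (u @ [a, b] @ v) \<subseteq> generate G (set (u @ [c, a] @ v))"
      by (auto intro: generate.incl)
  qed
  have 4: "\<forall>y0\<in>carrier G. tau (conj_class G y0) (u @ [c, a] @ v) = tau (conj_class G y0) (u @ [a, b] @ v)"
    using conj_class_conj2[OF b a] unfolding c_def by auto
  show ?case using 1 2 3 4 unfolding c_def by blast
qed

lemma hs_inv:
  assumes "hs G w w'" "set w \<subseteq> Y"
  shows "set w' \<subseteq> Y \<and> alpha G w' = alpha G w \<and> generate G (set w') = generate G (set w) \<and>
     (\<forall>y0\<in>carrier G. tau (conj_class G y0) w' = tau (conj_class G y0) w)"
  using assms
proof (induction rule: rtranclp_induct)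
  case base then show ?case by simp
next
  case (step y z)
  then show ?case using hstep_inv[of y z] by auto
qed

lemma to_front:
  assumes "set u \<subseteq> Y" "count_list u y = Suc n"
  shows "\<exists>t. hs G u (y # t) \<and> count_list t y = n"
proof -
  obtain pref rest where pr: "u = pref @ y # rest" "y \<notin> set pref" "count_list rest y = n"
    using count_list_Suc_split_first[OF assms(2)] by blast
  have y: "y \<in> carrier G" and pc: "set pref \<subseteq> carrier G" using assms pr Yc by auto
  have "hs G (pref @ [y] @ rest) ([y] @ map (\<lambda>x. inv y \<otimes> x \<otimes> y) pref @ rest)"
    using hs_app_right[OF move_left[of G pref y], of rest] by simp
  moreover have "count_list (map (\<lambda>x. inv y \<otimes> x \<otimes> y) pref) y = 0"
  proof -
    have "inv y \<otimes> x \<otimes> y \<noteq> y" if "x \<in> set pref" for x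
    proof
      assume e: "inv y \<otimes> x \<otimes> y = y"
      have x: "x \<in> carrier G" using that pc by auto
      have "x = y \<otimes> (inv y \<otimes> x \<otimes> y) \<otimes> inv y" using x y by (simp add: m_assoc)
      also have "\<dots> = y" using e y by (simp add: m_assoc)
      finally show False using that pr by simp
    qed
    then have "y \<notin> set (map (\<lambda>x. inv y \<otimes> x \<otimes> y) pref)" by (metis (no_types, lifting) imageE set_map)
    then show ?thesis by (simp add: count_list_0_iff)
  qed
  ultimately show ?thesis using pr by (intro exI[of _ "map (\<lambda>x. inv y \<otimes> x \<otimes> y) pref @ rest"]) auto
qed

lemma collect:
  assumes "set u \<subseteq> Y" "k \<le> count_list u y"
  shows "\<exists>t. hs G u (replicate k y @ t) \<and> count_list t y + k = count_list u y"
  using assms(2)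
proof (induction k)
  case 0 then show ?case by auto
next
  case (Suc k)
  then obtain t where t: "hs G u (replicate k y @ t)" "count_list t y + k = count_list u y" by auto
  have "set (replicate k y @ t) \<subseteq> Y" using hs_inv[OF t(1) assms(1)] by blast
  then have tY: "set t \<subseteq> Y" by simp
  have "count_list t y > 0" using t Suc.prems by linarith
  then obtain n where n: "count_list t y = Suc n" using gr0_implies_Suc by blast
  obtain t' where t': "hs G t (y # t')" "count_list t' y = n" using to_front[OF tY n] by blast
  have "hs G (replicate k y @ t) (replicate k y @ y # t')" using hs_app_left[OF t'(1)] .
  moreover have "replicate k y @ y # t' = replicate (Suc k) y @ t'"
    by (simp add: replicate_append_same[symmetric])
  ultimately have "hs G u (replicate (Suc k) y @ t')" using t(1) by (metis rtranclp_trans)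
  then show ?case using t n t' by auto
qed

lemma count_filter: "y \<in> C \<Longrightarrow> count_list (filter (\<lambda>x. x \<in> C) u) y = count_list u y"
  by (induction u) auto

lemma pigeon:
  assumes "y0 \<in> Y" "set u \<subseteq> Y" "tau (conj_class G y0) u \<ge> M * card Y" "M > 0"
  shows "\<exists>y\<in>conj_class G y0. count_list u y \<ge> M"
proof (rule ccontr)
  let ?C = "conj_class G y0"
  assume "\<not> ?thesis"
  then have lt: "\<forall>y\<in>?C. count_list u y \<le> M - 1" by auto
  have y0: "y0 \<in> carrier G" using assms Yc by auto
  have CY: "?C \<subseteq> Y" unfolding conj_class_def using Yconj assms(1) by auto
  have finC: "finite ?C" using CY finY finite_subset by auto
  have "tau ?C u = sum (count_list (filter (\<lambda>x. x \<in> ?C) u)) ?C"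
    unfolding tau_def by (rule sum_count_set[symmetric]) (auto simp: finC)
  also have "\<dots> = sum (count_list u) ?C" by (rule sum.cong) (auto simp: count_filter)
  also have "\<dots> \<le> sum (\<lambda>_. M - 1) ?C" using lt by (intro sum_mono) auto
  also have "\<dots> = card ?C * (M - 1)" by simp
  also have "\<dots> \<le> card Y * (M - 1)" using card_mono[OF finY CY] by simp
  also have "\<dots> < M * card Y"
  proof -
    have "card Y > 0" using finY assms(1) card_gt_0_iff by blast
    then show ?thesis using assms(4) by (simp add: algebra_simps)
  qed
  finally show False using assms(3) by simp
qed

end


lemma fe_ctx: "fact_eq G u v \<Longrightarrow> fact_eq G (p@u@q) (p@v@q)"
  unfolding fact_eq_def
proof (induction rule: equivclp_induct)
  case base then show ?case by simp
next
  case (step y z)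
  then show ?case using hstep_ctx[of G y z p q] hstep_ctx[of G z y p q]
    by (meson equivclp_into_equivclp)
qed

lemma fe_app_left: "fact_eq G u v \<Longrightarrow> fact_eq G (p@u) (p@v)"
  using fe_ctx[of G u v p "[]"] by simp
lemma fe_app_right: "fact_eq G u v \<Longrightarrow> fact_eq G (u@q) (v@q)"
  using fe_ctx[of G u v "[]" q] by simp
lemma hs_fe: "hs G u v \<Longrightarrow> fact_eq G u v"
  unfolding fact_eq_def by (rule rtranclp_into_equivclp)
lemma fe_sym: "fact_eq G u v \<Longrightarrow> fact_eq G v u"
  unfolding fact_eq_def by (rule equivclp_sym)
lemma fe_trans: "fact_eq G u v \<Longrightarrow> fact_eq G v w \<Longrightarrow> fact_eq G u w"
  unfolding fact_eq_def by (rule equivclp_trans)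
lemma fe_refl: "fact_eq G u u"
  unfolding fact_eq_def by simp

context cgrp begin

abbreviation P where "P y \<equiv> replicate NN y"

lemma tau_replicate[simp]: "tau C (replicate n y) = (if y \<in> C then n else 0)"
  by (induction n) auto

lemma P_central: "y \<in> Y \<Longrightarrow> set t \<subseteq> carrier G \<Longrightarrow> hs G (P y @ t) (t @ P y)"
  by (rule central_block) (auto simp: alpha_replicate Yc NN_central)

lemma P_central_fe: "y \<in> Y \<Longrightarrow> set t \<subseteq> Y \<Longrightarrow> fact_eq G (t @ P y) (P y @ t)"
  using P_central[of y t] Ysub by (auto intro: fe_sym hs_fe)

lemma P_conj_step:
  assumes y: "y \<in> Y" and z: "z \<in> Y"
  shows "fact_eq G (P y @ [z]) (P (z \<otimes> y \<otimes> inv z) @ [z])"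
proof -
  have y': "z \<otimes> y \<otimes> inv z \<in> Y" using Yconj2 Yc z y by auto
  have "hs G ([z] @ P y) (map (\<lambda>x. z \<otimes> x \<otimes> inv z) (P y) @ [z])" by (rule move_right)
  then have 1: "hs G ([z] @ P y) (P (z \<otimes> y \<otimes> inv z) @ [z])" by simp
  have 2: "hs G (P y @ [z]) ([z] @ P y)" using P_central[OF y, of "[z]"] z Yc by auto
  show ?thesis using 1 2 by (meson hs_fe fe_trans)
qed

lemma conv_aux:
  assumes w: "set w \<subseteq> Y" and gen: "generate G (set w) = carrier G"
  shows "h \<in> carrier G \<Longrightarrow> y \<in> Y \<Longrightarrow> fact_eq G (P y @ w) (P (h \<otimes> y \<otimes> inv h) @ w)"
proof -
  define H where "H = {h \<in> carrier G. \<forall>y\<in>Y. fact_eq G (P y @ w) (P (h \<otimes> y \<otimes> inv h) @ w)}"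
  have oneH: "\<one> \<in> H" unfolding H_def using Yc by (auto simp: fe_refl)
  have multH: "h1 \<otimes> h2 \<in> H" if h1: "h1 \<in> H" and h2: "h2 \<in> H" for h1 h2
  proof -
    have c1: "h1 \<in> carrier G" and c2: "h2 \<in> carrier G" using h1 h2 H_def by auto
    { fix y assume y: "y \<in> Y"
      have y2: "h2 \<otimes> y \<otimes> inv h2 \<in> Y" using Yconj2[OF c2 y] .
      have "fact_eq G (P y @ w) (P (h2 \<otimes> y \<otimes> inv h2) @ w)" using h2 y H_def by auto
      moreover have "fact_eq G (P (h2 \<otimes> y \<otimes> inv h2) @ w) (P (h1 \<otimes> (h2 \<otimes> y \<otimes> inv h2) \<otimes> inv h1) @ w)"
        using h1 y2 H_def by auto
      moreover have "h1 \<otimes> (h2 \<otimes> y \<otimes> inv h2) \<otimes> inv h1 = (h1 \<otimes> h2) \<otimes> y \<otimes> inv (h1 \<otimes> h2)"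
        using c1 c2 y Yc by (simp add: m_assoc inv_mult_group)
      ultimately have "fact_eq G (P y @ w) (P ((h1 \<otimes> h2) \<otimes> y \<otimes> inv (h1 \<otimes> h2)) @ w)"
        by (metis fe_trans)
    }
    then show ?thesis unfolding H_def using c1 c2 by auto
  qed
  have inclH: "z \<in> H" if z: "z \<in> set w" for z
  proof -
    have zY: "z \<in> Y" using z w by auto
    obtain a b where ab: "w = a @ z # b" using split_list[OF z] by blast
    have aY: "set a \<subseteq> Y" using ab w by auto
    { fix y assume y: "y \<in> Y"
      have y': "z \<otimes> y \<otimes> inv z \<in> Y" using Yconj2 Yc zY y by auto
      have "fact_eq G (P y @ a @ [z] @ b) (a @ P y @ [z] @ b)"
        using fe_app_right[OF P_central_fe[OF y aY], of "[z] @ b"] by (simp add: fe_sym)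
      moreover have "fact_eq G (a @ P y @ [z] @ b) (a @ P (z \<otimes> y \<otimes> inv z) @ [z] @ b)"
        using fe_ctx[OF P_conj_step[OF y zY], of a b] by simp
      moreover have "fact_eq G (a @ P (z \<otimes> y \<otimes> inv z) @ [z] @ b) (P (z \<otimes> y \<otimes> inv z) @ a @ [z] @ b)"
        using fe_app_right[OF P_central_fe[OF y' aY], of "[z] @ b"] by simp
      ultimately have "fact_eq G (P y @ w) (P (z \<otimes> y \<otimes> inv z) @ w)" unfolding ab
        by (metis fe_trans append_Cons append_Nil)
    }
    then show ?thesis unfolding H_def using zY Yc by auto
  qed
  have pow: "z [^] (n::nat) \<in> H" if "z \<in> H" for z n
    using that by (induction n) (auto simp: oneH multH)
  have incl_invH: "inv z \<in> H" if z: "z \<in> set w" for z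
  proof -
    have zY: "z \<in> Y" using z w by auto
    have zc: "z \<in> carrier G" using zY Yc by auto
    define c where "c = z [^] NN"
    have cc: "c \<in> carrier G" unfolding c_def using zc by simp
    have cent: "\<And>g. g \<in> carrier G \<Longrightarrow> c \<otimes> g = g \<otimes> c" unfolding c_def using NN_central zY by auto
    obtain k where k: "NN = Suc k" using NN_pos gr0_implies_Suc by blast
    have "c = z [^] k \<otimes> z" unfolding c_def k by (simp add: nat_pow_Suc)
    then have zk: "z [^] k = c \<otimes> inv z" using zc cc by (simp add: m_assoc)
    have zkH: "z [^] k \<in> H" using pow[OF inclH[OF z]] .
    { fix y assume y: "y \<in> Y"
      have yc: "y \<in> carrier G" using y Yc by auto
      have "z [^] k \<otimes> y \<otimes> inv (z [^] k) = c \<otimes> (inv z \<otimes> y \<otimes> z) \<otimes> inv c"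
        unfolding zk using cc zc yc by (simp add: m_assoc inv_mult_group)
      also have "\<dots> = (inv z \<otimes> y \<otimes> z) \<otimes> c \<otimes> inv c" using cent[of "inv z \<otimes> y \<otimes> z"] cc zc yc by simp
      also have "\<dots> = inv z \<otimes> y \<otimes> inv (inv z)" using cc zc yc by (simp add: m_assoc)
      finally have "z [^] k \<otimes> y \<otimes> inv (z [^] k) = inv z \<otimes> y \<otimes> inv (inv z)" .
    }
    then show ?thesis using zkH zc unfolding H_def by auto
  qed
  have "generate G (set w) \<subseteq> H"
  proof
    fix h assume "h \<in> generate G (set w)"
    then show "h \<in> H"
    proof (induction rule: generate.induct)
      case one then show ?case by (rule oneH)
    next
      case (incl h) then show ?case by (rule inclH)
    next
      case (inv h) then show ?case by (rule incl_invH)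
    next
      case (eng h1 h2) then show ?case using multH by blast
    qed
  qed
  then show "h \<in> carrier G \<Longrightarrow> y \<in> Y \<Longrightarrow> fact_eq G (P y @ w) (P (h \<otimes> y \<otimes> inv h) @ w)"
    using gen H_def by auto
qed

lemma conv:
  assumes "set w \<subseteq> Y" "generate G (set w) = carrier G" "y \<in> Y" "r \<in> conj_class G y"
  shows "fact_eq G (P y @ w) (P r @ w)"
proof -
  obtain g where g: "g \<in> carrier G" "r = inv g \<otimes> y \<otimes> g" using assms(4) by (auto simp: conj_class_def)
  show ?thesis using conv_aux[OF assms(1,2), of "inv g" y] g assms(3) by simp
qed

lemma class_iff:
  assumes "x \<in> carrier G" "y1 \<in> carrier G"
  shows "x \<in> conj_class G y1 \<longleftrightarrow> conj_class G x = conj_class G y1"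
  using conj_class_eq[OF assms, of x] conj_class_self[OF assms(1)] by auto

lemma alpha_P_app: "y \<in> carrier G \<Longrightarrow> set u \<subseteq> carrier G \<Longrightarrow> alpha G (P y @ u) = y [^] NN \<otimes> alpha G u"
  using alpha_append[of "P y" u] alpha_replicate[of y NN] by (cases "NN = 0") auto

lemma conj_pow: "g \<in> carrier G \<Longrightarrow> y \<in> carrier G \<Longrightarrow> (inv g \<otimes> y \<otimes> g) [^] (n::nat) = inv g \<otimes> y [^] n \<otimes> g"
proof (induction n)
  case 0 then show ?case by simp
next
  case (Suc n)
  then show ?case by (simp add: nat_pow_Suc m_assoc)
qed

lemma extract1:
  assumes u: "set u \<subseteq> Y" and gen: "generate G (set u) = carrier G" and y0: "y0 \<in> Y"
    and big: "tau (conj_class G y0) u \<ge> 2 * NN * card Y" and r: "r \<in> conj_class G y0"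
  shows "\<exists>u'. fact_eq G u (P r @ u') \<and> set u' \<subseteq> Y \<and> generate G (set u') = carrier G \<and>
     (\<forall>y1\<in>Y. tau (conj_class G y1) u' + (if r \<in> conj_class G y1 then NN else 0) = tau (conj_class G y1) u) \<and>
     alpha G u = alpha G (P r @ u')"
proof -
  obtain y where y: "y \<in> conj_class G y0" "count_list u y \<ge> 2 * NN"
    using pigeon[OF y0 u, of "2 * NN"] big NN_pos by (auto simp: mult.assoc)
  have CY: "conj_class G y0 \<subseteq> Y" unfolding conj_class_def using Yconj y0 by auto
  have yY: "y \<in> Y" using y CY by auto
  have y0c: "y0 \<in> carrier G" and yc: "y \<in> carrier G" using y0 yY Yc by auto
  obtain t where t: "hs G u (replicate (2 * NN) y @ t)" using collect[OF u y(2)] by blast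
  have inv: "set (replicate (2 * NN) y @ t) \<subseteq> Y"
     "generate G (set (replicate (2 * NN) y @ t)) = carrier G"
     "\<forall>y1\<in>carrier G. tau (conj_class G y1) (replicate (2 * NN) y @ t) = tau (conj_class G y1) u"
    using hs_inv[OF t u] gen by auto
  have rep: "replicate (2 * NN) y @ t = P y @ (P y @ t)" by (simp add: mult_2 replicate_add)
  define u' where "u' = P y @ t"
  have set_eq: "set u' = set (replicate (2 * NN) y @ t)" unfolding u'_def using NN_pos by auto
  have u'Y: "set u' \<subseteq> Y" and gen': "generate G (set u') = carrier G" using inv set_eq by auto
  have ccy: "conj_class G y = conj_class G y0" using class_iff[OF yc y0c] y by simp
  have "fact_eq G (P y @ u') (P r @ u')" by (rule conv[OF u'Y gen' yY]) (use r ccy in simp)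
  then have fe: "fact_eq G u (P r @ u')" using hs_fe[OF t] rep unfolding u'_def by (metis fe_trans)
  have rc: "r \<in> carrier G" using r CY Yc by auto
  have ccr: "conj_class G r = conj_class G y0" using class_iff[OF rc y0c] r by simp
  { fix y1 assume y1: "y1 \<in> Y"
    have y1c: "y1 \<in> carrier G" using y1 Yc by auto
    have "(y \<in> conj_class G y1) = (r \<in> conj_class G y1)"
      using class_iff[OF yc y1c] class_iff[OF rc y1c] ccy ccr by simp
    moreover have "tau (conj_class G y1) u = tau (conj_class G y1) (P y @ (P y @ t))"
      using inv(3) y1c rep by metis
    ultimately have "tau (conj_class G y1) u' + (if r \<in> conj_class G y1 then NN else 0) = tau (conj_class G y1) u"
      unfolding u'_def by simp
  }
  note taus = this
  have al: "alpha G u = alpha G (P r @ u')"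
  proof -
    have "alpha G u = alpha G (replicate (2 * NN) y @ t)" using hs_inv[OF t u] by simp
    also have "\<dots> = alpha G (P y @ u')" unfolding rep u'_def ..
    also have "\<dots> = alpha G (P r @ u')"
    proof -
      obtain g where g: "g \<in> carrier G" "r = inv g \<otimes> y \<otimes> g"
        using r ccy conj_class_def[of G y] by auto
      have "r [^] NN = y [^] NN"
        using conj_pow[OF g(1) yc, of NN] NN_central[OF yY, of g] g yc by (simp add: m_assoc)
      moreover have "set u' \<subseteq> carrier G" using u'Y Ysub by auto
      ultimately show ?thesis using yc rc by (simp add: alpha_P_app)
    qed
    finally show ?thesis .
  qed
  show ?thesis using fe u'Y gen' al taus by blast
qed

lemma extractL:
  assumes "set u \<subseteq> Y" "generate G (set u) = carrier G" "set ts \<subseteq> Y"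
    "\<forall>y0\<in>Y. tau (conj_class G y0) u \<ge> 2 * NN * card Y + NN * tau (conj_class G y0) ts"
  shows "\<exists>u'. fact_eq G u (concat (map P ts) @ u') \<and> set u' \<subseteq> Y \<and> generate G (set u') = carrier G \<and>
     (\<forall>y0\<in>Y. tau (conj_class G y0) u' + NN * tau (conj_class G y0) ts = tau (conj_class G y0) u) \<and>
     alpha G u = alpha G (concat (map P ts) @ u')"
  using assms
proof (induction ts arbitrary: u)
  case Nil then show ?case by (auto intro: fe_refl)
next
  case (Cons r ts)
  have rY: "r \<in> Y" using Cons by auto
  have rc: "r \<in> carrier G" using rY Yc by auto
  have "tau (conj_class G r) u \<ge> 2 * NN * card Y" using Cons.prems(4) rY by fastforce
  then obtain u1 where u1: "fact_eq G u (P r @ u1)" "set u1 \<subseteq> Y" "generate G (set u1) = carrier G"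
    "\<forall>y1\<in>Y. tau (conj_class G y1) u1 + (if r \<in> conj_class G y1 then NN else 0) = tau (conj_class G y1) u"
    "alpha G u = alpha G (P r @ u1)"
    using extract1[OF Cons.prems(1,2) rY _ conj_class_self[OF rc]] by blast
  have "\<forall>y0\<in>Y. tau (conj_class G y0) u1 \<ge> 2 * NN * card Y + NN * tau (conj_class G y0) ts"
  proof
    fix y0 assume y0: "y0 \<in> Y"
    have "tau (conj_class G y0) u \<ge> 2 * NN * card Y + NN * tau (conj_class G y0) (r # ts)"
      using Cons.prems(4) y0 by blast
    then show "tau (conj_class G y0) u1 \<ge> 2 * NN * card Y + NN * tau (conj_class G y0) ts"
      using u1(4) y0 by (auto simp: algebra_simps split: if_splits) 
  qed
  then obtain u2 where u2: "fact_eq G u1 (concat (map P ts) @ u2)" "set u2 \<subseteq> Y" "generate G (set u2) = carrier G"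
     "\<forall>y0\<in>Y. tau (conj_class G y0) u2 + NN * tau (conj_class G y0) ts = tau (conj_class G y0) u1"
     "alpha G u1 = alpha G (concat (map P ts) @ u2)"
    using Cons.IH[OF u1(2,3)] Cons.prems(3) by auto
  have "fact_eq G u (concat (map P (r # ts)) @ u2)"
    using fe_trans[OF u1(1) fe_app_left[OF u2(1), of "P r"]] by simp
  moreover have "\<forall>y0\<in>Y. tau (conj_class G y0) u2 + NN * tau (conj_class G y0) (r # ts) = tau (conj_class G y0) u"
    using u1(4) u2(4) by (auto simp: algebra_simps split: if_splits)
  moreover have "alpha G u = alpha G (concat (map P (r # ts)) @ u2)"
  proof -
    have s1: "set (concat (map P ts) @ u2) \<subseteq> carrier G" using Cons.prems(3) u2(2) Ysub by auto
    have u1c: "set u1 \<subseteq> carrier G" using u1(2) Ysub by auto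
    have "alpha G u = r [^] NN \<otimes> alpha G u1" using u1(5) u1c rc by (simp add: alpha_P_app)
    also have "\<dots> = alpha G (P r @ (concat (map P ts) @ u2))"
      using u2(5) s1 rc by (simp add: alpha_P_app)
    finally show ?thesis by simp
  qed
  ultimately show ?case using u2 by blast
qed

end


lemma rep_app_Cons: "replicate n x @ x # xs = x # replicate n x @ xs"
  by (induction n) auto

definition pstep :: "('a \<times> 'a \<times> 'a) set \<Rightarrow> 'a set \<Rightarrow> ('a \<times> bool) list \<Rightarrow> ('a \<times> bool) list \<Rightarrow> bool" where
  "pstep R Y w w' \<longleftrightarrow>
     (\<exists>u y e v. y \<in> Y \<and> w = u @ [(y, e), (y, \<not> e)] @ v \<and> w' = u @ v) \<or>
     (\<exists>u y y' z v. (y, y', z) \<in> R \<and> w = u @ [(z, False), (y, True), (z, True)] @ v \<and> w' = u @ [(y', True)] @ v)"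

lemma pres_eq_equivclp: "pres_eq Y R w1 w2 \<Longrightarrow> equivclp (pstep R Y) w1 w2"
proof (induction rule: pres_eq.induct)
  case (pres_refl w) then show ?case by simp
next
  case (pres_sym w1 w2) then show ?case by (meson equivclp_sym)
next
  case (pres_trans w1 w2 w3) then show ?case by (meson equivclp_trans)
next
  case (pres_cancel y u e v) then show ?case unfolding pstep_def by blast
next
  case (pres_rel y y' z u v) then show ?case unfolding pstep_def by blast
qed

context cgrp begin

definition pos :: "('a \<times> bool) list \<Rightarrow> 'a list" where
  "pos w = concat (map (\<lambda>(y, e). if e then [y] else replicate (NN - 1) y) w)"

definition invc :: "'a \<Rightarrow> ('a \<times> bool) list \<Rightarrow> nat" where
  "invc x w = count_list w (x, False)"

definition ys :: "'a list" where "ys = (SOME l. set l = Y \<and> distinct l)"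

lemma ys: "set ys = Y" "distinct ys"
  using someI_ex[OF finite_distinct_list[OF finY]] unfolding ys_def[symmetric] by auto

definition Rw :: "nat \<Rightarrow> ('a \<times> bool) list \<Rightarrow> 'a list" where
  "Rw b w = concat (map (\<lambda>x. replicate ((b - invc x w) * NN) x) ys)"

lemma pos_append[simp]: "pos (a @ b) = pos a @ pos b" by (simp add: pos_def)
lemma pos_Cons[simp]: "pos ((y, e) # a) = (if e then [y] else replicate (NN - 1) y) @ pos a" by (simp add: pos_def)
lemma pos_Nil[simp]: "pos [] = []" by (simp add: pos_def)

lemma pos_set: "set w \<subseteq> Y \<times> UNIV \<Longrightarrow> set (pos w) \<subseteq> Y"
  by (induction w) (auto split: if_splits)

lemma Rw_set: "set (Rw b w) \<subseteq> Y"
  unfolding Rw_def using ys by auto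

lemma pos_positive: "pos (map (\<lambda>y. (y, True)) u) = u"
  by (induction u) auto

lemma fe_insert_block:
  assumes "set xs \<subseteq> Y" "distinct xs" "y \<in> set xs" "\<And>x. x \<in> set xs \<Longrightarrow> set (g x) \<subseteq> Y"
    "\<And>x. x \<in> set xs \<Longrightarrow> x \<noteq> y \<Longrightarrow> g' x = g x" "g' y = g y @ P y"
  shows "fact_eq G (concat (map g xs) @ P y) (concat (map g' xs))"
  using assms
proof (induction xs)
  case Nil then show ?case by simp
next
  case (Cons x xs)
  show ?case
  proof (cases "x = y")
    case True
    have nin: "y \<notin> set xs" using Cons True by auto
    have yY: "y \<in> Y" using Cons True by auto
    have cY: "set (concat (map g xs)) \<subseteq> Y" using Cons.prems(4) by auto
    have me: "map g' xs = map g xs" using Cons nin by (intro map_cong) auto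
    have fy: "fact_eq G (g y @ concat (map g xs) @ P y) (g y @ P y @ concat (map g xs))"
      using fe_app_left[OF P_central_fe[OF yY cY], of "g y"] by simp
    have "concat (map g' (x # xs)) = g y @ P y @ concat (map g xs)"
      unfolding list.map concat.simps me using True Cons.prems(6) by simp
    moreover have "concat (map g (x # xs)) @ P y = g y @ concat (map g xs) @ P y"
      using True by simp
    ultimately show ?thesis using fy by simp
  next
    case False
    have "fact_eq G (concat (map g xs) @ P y) (concat (map g' xs))"
      using Cons.IH Cons.prems False by auto
    then show ?thesis using fe_app_left[of G _ _ "g x"] False Cons by simp
  qed
qed

lemma absorb:
  assumes AY: "set A \<subseteq> Y" and BY: "set B \<subseteq> Y" and yY: "y \<in> Y"
    and inv_other: "\<And>x. x \<noteq> y \<Longrightarrow> invc x w = invc x w'"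
    and inv_y: "invc y w = Suc (invc y w')" and le: "invc y w \<le> b"
  shows "fact_eq G (A @ P y @ B @ Rw b w) (A @ B @ Rw b w')"
proof -
  have "set (B @ Rw b w) \<subseteq> carrier G" using BY Rw_set[of b w] Ysub by auto
  then have 1: "fact_eq G (P y @ (B @ Rw b w)) ((B @ Rw b w) @ P y)"
    using hs_fe[OF P_central[OF yY, of "B @ Rw b w"]] by auto
  have 2: "fact_eq G (Rw b w @ P y) (Rw b w')"
    unfolding Rw_def
  proof (rule fe_insert_block)
    show "set ys \<subseteq> Y" "distinct ys" "y \<in> set ys" using ys yY by auto
    show "\<And>x. x \<in> set ys \<Longrightarrow> set (replicate ((b - invc x w) * NN) x) \<subseteq> Y" using ys by auto
    show "\<And>x. x \<in> set ys \<Longrightarrow> x \<noteq> y \<Longrightarrow> replicate ((b - invc x w') * NN) x = replicate ((b - invc x w) * NN) x"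
      using inv_other by simp
    have "b - invc y w' = Suc (b - invc y w)" using inv_y le by simp
    then have "(b - invc y w') * NN = (b - invc y w) * NN + NN" by simp
    then show "replicate ((b - invc y w') * NN) y = replicate ((b - invc y w) * NN) y @ P y"
      by (simp add: replicate_add)
  qed
  have "fact_eq G (A @ P y @ B @ Rw b w) (A @ B @ Rw b w @ P y)"
    using fe_app_left[OF 1, of A] by simp
  moreover have "fact_eq G (A @ B @ Rw b w @ P y) (A @ B @ Rw b w')"
    using fe_app_left[OF 2, of "A @ B"] by simp
  ultimately show ?thesis by (rule fe_trans)
qed

lemma invc_append[simp]: "invc x (a @ b) = invc x a + invc x b" by (simp add: invc_def)
lemma invc_Cons[simp]: "invc x (p # a) = (if p = (x, False) then 1 else 0) + invc x a" by (simp add: invc_def)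
lemma invc_Nil[simp]: "invc x [] = 0" by (simp add: invc_def)
lemma invc_le: "invc x w \<le> length w" unfolding invc_def by (rule count_le_length)

lemma pstep_fe:
  assumes R: "R \<subseteq> {(y, y', z). y \<in> Y \<and> y' \<in> Y \<and> z \<in> Y \<and> inv z \<otimes> y \<otimes> z = y'}"
    and st: "pstep R Y w w'" and wY: "set w \<subseteq> Y \<times> UNIV" and lw: "length w \<le> b"
  shows "fact_eq G (pos w @ Rw b w) (pos w' @ Rw b w')"
  using st unfolding pstep_def
proof (elim disjE exE conjE)
  fix u y e v assume yY: "y \<in> Y" and w: "w = u @ [(y, e), (y, \<not> e)] @ v" and w': "w' = u @ v"
  have uY: "set (pos u) \<subseteq> Y" and vY: "set (pos v) \<subseteq> Y" using wY w pos_set[of u] pos_set[of v] by auto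
  have pw: "pos w = pos u @ P y @ pos v"
  proof -
    have "(if e then [y] else replicate (NN - 1) y) @ (if \<not> e then [y] else replicate (NN - 1) y) = P y"
      using NN_pos by (cases NN) (auto simp: replicate_append_same)
    then show ?thesis unfolding w by simp
  qed
  have io: "\<And>x. x \<noteq> y \<Longrightarrow> invc x w = invc x w'" unfolding w w' by auto
  have iy: "invc y w = Suc (invc y w')" unfolding w w' by auto
  have le: "invc y w \<le> b" using invc_le[of y w] lw by simp
  have pw': "pos w' = pos u @ pos v" unfolding w' by simp
  show ?thesis unfolding pw pw' using absorb[OF uY vY yY io iy le] by simp
next
  fix u y y' z v assume yR: "(y, y', z) \<in> R" and w: "w = u @ [(z, False), (y, True), (z, True)] @ v"
    and w': "w' = u @ [(y', True)] @ v"
  have yY: "y \<in> Y" and zY: "z \<in> Y" and y'Y: "y' \<in> Y" and y'e: "inv z \<otimes> y \<otimes> z = y'" using yR R by auto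
  have uY: "set (pos u) \<subseteq> Y" and vY: "set (pos v) \<subseteq> Y" using wY w pos_set[of u] pos_set[of v] by auto
  have pw: "pos w = pos u @ replicate (NN - 1) z @ [y, z] @ pos v" unfolding w by simp
  have "hurwitz_step G ((pos u @ replicate (NN - 1) z) @ [y, z] @ pos v)
        ((pos u @ replicate (NN - 1) z) @ [z, inv z \<otimes> y \<otimes> z] @ pos v)"
    by (rule hurwitz_step.hs1)
  then have hsw: "hs G (pos w) (pos u @ P z @ [y'] @ pos v)"
    using pw y'e NN_pos by (cases NN) (auto simp: rep_app_Cons)
  have 1: "fact_eq G (pos w @ Rw b w) (pos u @ P z @ ([y'] @ pos v) @ Rw b w)"
    using fe_app_right[OF hs_fe[OF hsw], of "Rw b w"] by simp
  have io: "\<And>x. x \<noteq> z \<Longrightarrow> invc x w = invc x w'" unfolding w w' by auto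
  have iy: "invc z w = Suc (invc z w')" unfolding w w' by auto
  have le: "invc z w \<le> b" using invc_le[of z w] lw by simp
  have B: "set ([y'] @ pos v) \<subseteq> Y" using vY y'Y by auto
  have 2: "fact_eq G (pos u @ P z @ ([y'] @ pos v) @ Rw b w) (pos u @ ([y'] @ pos v) @ Rw b w')"
    using absorb[OF uY B zY io iy le] .
  show ?thesis using fe_trans[OF 1 2] w' by simp
qed

lemma pstep_set:
  assumes R: "R \<subseteq> {(y, y', z). y \<in> Y \<and> y' \<in> Y \<and> z \<in> Y \<and> inv z \<otimes> y \<otimes> z = y'}"
    and st: "pstep R Y w w'"
  shows "set w \<subseteq> Y \<times> UNIV \<longleftrightarrow> set w' \<subseteq> Y \<times> UNIV"
  using st R unfolding pstep_def by (elim disjE exE conjE) auto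

lemma chain:
  assumes R: "R \<subseteq> {(y, y', z). y \<in> Y \<and> y' \<in> Y \<and> z \<in> Y \<and> inv z \<otimes> y \<otimes> z = y'}"
    and ch: "(symclp (pstep R Y))\<^sup>*\<^sup>* w1 w2" and w1: "set w1 \<subseteq> Y \<times> UNIV"
  shows "\<exists>b. set w2 \<subseteq> Y \<times> UNIV \<and> length w1 \<le> b \<and> length w2 \<le> b \<and>
      (\<forall>b'\<ge>b. fact_eq G (pos w1 @ Rw b' w1) (pos w2 @ Rw b' w2))"
  using ch
proof (induction rule: rtranclp_induct)
  case base then show ?case using w1 by (auto intro: fe_refl)
next
  case (step x z)
  then obtain b where b: "set x \<subseteq> Y \<times> UNIV" "length w1 \<le> b" "length x \<le> b"
      "\<forall>b'\<ge>b. fact_eq G (pos w1 @ Rw b' w1) (pos x @ Rw b' x)" by blast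
  have zY: "set z \<subseteq> Y \<times> UNIV" using step(2) pstep_set[OF R] b(1) by (auto simp: symclp_def)
  define b2 where "b2 = max b (length z)"
  have "\<forall>b'\<ge>b2. fact_eq G (pos w1 @ Rw b' w1) (pos z @ Rw b' z)"
  proof (intro allI impI)
    fix b' assume b': "b' \<ge> b2"
    have "fact_eq G (pos x @ Rw b' x) (pos z @ Rw b' z)"
      using step(2) unfolding symclp_def
    proof
      assume "pstep R Y x z"
      then show ?thesis using pstep_fe[OF R _ b(1)] b b' b2_def by auto
    next
      assume "pstep R Y z x"
      then show ?thesis using pstep_fe[OF R _ zY] b b' b2_def by (auto intro: fe_sym)
    qed
    then show "fact_eq G (pos w1 @ Rw b' w1) (pos z @ Rw b' z)"
      using b(4) b' b2_def by (auto intro: fe_trans)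
  qed
  then show ?case using zY b b2_def by (intro exI[of _ b2]) auto
qed

definition R0 :: "nat \<Rightarrow> 'a list" where
  "R0 b = concat (map (\<lambda>x. replicate (b * NN) x) ys)"

lemma Rw_positive: "Rw b (map (\<lambda>y. (y, True)) u) = R0 b"
proof -
  have "invc x (map (\<lambda>y. (y, True)) u) = 0" for x by (induction u) auto
  then show ?thesis unfolding Rw_def R0_def by simp
qed

lemma positive_chain:
  assumes R: "R \<subseteq> {(y, y', z). y \<in> Y \<and> y' \<in> Y \<and> z \<in> Y \<and> inv z \<otimes> y \<otimes> z = y'}"
    and pe: "pres_eq Y R (map (\<lambda>y. (y, True)) u1) (map (\<lambda>y. (y, True)) u2)"
    and u1: "set u1 \<subseteq> Y"
  shows "\<exists>b. \<forall>b'\<ge>b. fact_eq G (u1 @ R0 b') (u2 @ R0 b')"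
proof -
  have "(symclp (pstep R Y))\<^sup>*\<^sup>* (map (\<lambda>y. (y, True)) u1) (map (\<lambda>y. (y, True)) u2)"
    using pres_eq_equivclp[OF pe] unfolding equivclp_def .
  from chain[OF R this] u1 obtain b where
    "\<forall>b'\<ge>b. fact_eq G (pos (map (\<lambda>y. (y, True)) u1) @ Rw b' (map (\<lambda>y. (y, True)) u1))
       (pos (map (\<lambda>y. (y, True)) u2) @ Rw b' (map (\<lambda>y. (y, True)) u2))" by auto
  then show ?thesis by (auto simp: pos_positive Rw_positive)
qed

end


context cgrp begin

definition sig :: "'a set \<Rightarrow> ('a \<times> bool) list \<Rightarrow> int" where
  "sig C w = sum_list (map (\<lambda>(y, e). if y \<in> C then (if e then 1 else -1) else 0) w)"

lemma sig_append[simp]: "sig C (a @ b) = sig C a + sig C b" by (simp add: sig_def)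
lemma sig_Cons[simp]: "sig C ((y, e) # a) = (if y \<in> C then (if e then 1 else -1) else 0) + sig C a"
  by (simp add: sig_def)
lemma sig_Nil[simp]: "sig C [] = 0" by (simp add: sig_def)

lemma sig_inv:
  assumes R: "R \<subseteq> {(y, y', z). y \<in> Y \<and> y' \<in> Y \<and> z \<in> Y \<and> inv z \<otimes> y \<otimes> z = y'}"
    and pe: "pres_eq Y R w1 w2" and y0: "y0 \<in> carrier G"
  shows "sig (conj_class G y0) w1 = sig (conj_class G y0) w2"
  using pe
proof (induction rule: pres_eq.induct)
  case (pres_cancel y u e v) then show ?case by (cases e) auto
next
  case (pres_rel y y' z u v)
  have "y \<in> carrier G" "z \<in> carrier G" "inv z \<otimes> y \<otimes> z = y'" using pres_rel R Yc by auto
  then have "(y' \<in> conj_class G y0) = (y \<in> conj_class G y0)" using conj_class_conj[OF _ _ y0] by blast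
  then show ?case by auto
qed auto

lemma sig_pos: "sig C (map (\<lambda>y. (y, True)) u) = int (tau C u)"
  by (induction u) auto

lemma word_eval_pos: "word_eval G (map (\<lambda>y. (y, True)) u) = alpha G u"
  by (induction u) (auto simp: word_eval_def alpha_def)

lemma count_le_tau: "y \<in> C \<Longrightarrow> count_list u y \<le> tau C u"
  by (induction u) auto

lemma tau_reps:
  assumes "distinct Cs" "\<forall>C'\<in>set Cs. (r C' \<in> C) = (C' = C)"
  shows "tau C (concat (map (\<lambda>C'. replicate (f C') (r C')) Cs)) = (if C \<in> set Cs then f C else 0)"
  using assms by (induction Cs) auto

lemma concat_rep: "concat (replicate B (replicate n x)) = replicate (B * n) x"
  by (induction B) (auto simp: replicate_add)

lemma set_rep_sub: "x \<in> carrier G \<Longrightarrow> set (replicate n x) \<subseteq> carrier G"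
  by auto

lemma R0_comm:
  assumes "set l \<subseteq> Y"
  shows "alpha G (concat (map (\<lambda>x. replicate (b * NN) x) l)) \<in> carrier G \<and>
    (\<forall>g\<in>carrier G. alpha G (concat (map (\<lambda>x. replicate (b * NN) x) l)) \<otimes> g = g \<otimes> alpha G (concat (map (\<lambda>x. replicate (b * NN) x) l)))"
  using assms
proof (induction l)
  case Nil then show ?case by (simp add: alpha_def)
next
  case (Cons x l)
  let ?c = "alpha G (concat (map (\<lambda>x. replicate (b * NN) x) l))"
  have xc: "x \<in> carrier G" and xY: "x \<in> Y" using Cons Yc by auto
  have IH: "?c \<in> carrier G" "\<forall>g\<in>carrier G. ?c \<otimes> g = g \<otimes> ?c" using Cons by auto
  have lc: "set (concat (map (\<lambda>x. replicate (b * NN) x) l)) \<subseteq> carrier G" using Cons Ysub by auto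
  have a: "alpha G (concat (map (\<lambda>x. replicate (b * NN) x) (x # l))) = (x [^] NN) [^] b \<otimes> ?c"
    using alpha_append[of "replicate (b * NN) x" "concat (map (\<lambda>x. replicate (b * NN) x) l)"] lc xc
      set_rep_sub[OF xc, of "b * NN"]
    by (simp add: alpha_replicate nat_pow_pow mult.commute)
  have xn: "x [^] NN \<in> carrier G" using xc by simp
  have cx: "(x [^] NN) [^] b \<otimes> g = g \<otimes> (x [^] NN) [^] b" if g: "g \<in> carrier G" for g
    using comm_pow[OF xn g NN_central[OF xY g]] .
  have "((x [^] NN) [^] b \<otimes> ?c) \<otimes> g = g \<otimes> ((x [^] NN) [^] b \<otimes> ?c)" if g: "g \<in> carrier G" for g
  proof -
    have "((x [^] NN) [^] b \<otimes> ?c) \<otimes> g = (x [^] NN) [^] b \<otimes> (?c \<otimes> g)" using g IH xn by (simp add: m_assoc)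
    also have "\<dots> = (x [^] NN) [^] b \<otimes> (g \<otimes> ?c)" using IH g by simp
    also have "\<dots> = ((x [^] NN) [^] b \<otimes> g) \<otimes> ?c" using g IH xn by (simp add: m_assoc)
    also have "\<dots> = (g \<otimes> (x [^] NN) [^] b) \<otimes> ?c" using cx[OF g] by simp
    also have "\<dots> = g \<otimes> ((x [^] NN) [^] b \<otimes> ?c)" using g IH xn by (simp add: m_assoc)
    finally show ?thesis .
  qed
  then show ?case unfolding a using IH xn by auto
qed

lemma R0_central: "set u \<subseteq> Y \<Longrightarrow> hs G (R0 b @ u) (u @ R0 b)"
  unfolding R0_def
  by (rule central_block) (use R0_comm[of ys b] ys Ysub in auto)

end


context cgrp begin

lemma concat_P_tsR: "concat (map P (concat (map (\<lambda>x. replicate B x) l))) = concat (map (\<lambda>x. replicate (B * NN) x) l)"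
  by (induction l) (auto simp: concat_rep map_replicate)

lemma main:
  assumes R: "R \<subseteq> {(y, y', z). y \<in> Y \<and> y' \<in> Y \<and> z \<in> Y \<and> inv z \<otimes> y \<otimes> z = y'}"
    and pres: "presents G Y R"
  shows "\<exists>T :: nat. \<forall>s1 s2.
           set s1 \<subseteq> Y \<and> set s2 \<subseteq> Y \<and>
           generate G (set s1) = carrier G \<and> generate G (set s2) = carrier G \<and>
           (\<forall>y0 \<in> Y. tau (conj_class G y0) s1 \<ge> T) \<and>
           alpha G s1 = alpha G s2
           \<longrightarrow> fact_eq G s1 s2"
proof -
  have pe_of: "pres_eq Y R (map (\<lambda>y. (y, True)) v1) (map (\<lambda>y. (y, True)) v2)"
    if "set v1 \<subseteq> Y" "set v2 \<subseteq> Y" "alpha G v1 = alpha G v2" for v1 v2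
  proof -
    have l1: "map (\<lambda>y. (y, True)) v1 \<in> lists (Y \<times> UNIV)" using that(1) by auto
    have l2: "map (\<lambda>y. (y, True)) v2 \<in> lists (Y \<times> UNIV)" using that(2) by auto
    have "word_eval G (map (\<lambda>y. (y, True)) v1) = word_eval G (map (\<lambda>y. (y, True)) v2)"
      using that(3) by (simp add: word_eval_pos)
    then show ?thesis using pres l1 l2 unfolding presents_def by blast
  qed
  obtain Cs where Cs: "set Cs = classes_of G Y" "distinct Cs"
    using finite_distinct_list[of "classes_of G Y"] finY unfolding classes_of_def by auto
  define rp where "rp C = (SOME y. y \<in> C)" for C :: "'a set"
  have rp_in: "rp (conj_class G y1) \<in> conj_class G y1" if "y1 \<in> Y" for y1
    unfolding rp_def using conj_class_self[OF Yc[OF that]] by (rule someI)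
  have ccY: "conj_class G y1 \<subseteq> Y" if "y1 \<in> Y" for y1
    unfolding conj_class_def using Yconj that by auto
  have rp_iff: "(rp C' \<in> conj_class G y0) = (C' = conj_class G y0)" if C'in: "C' \<in> set Cs" and y0Y: "y0 \<in> Y" for C' y0
  proof -
    obtain y1 where y1: "y1 \<in> Y" "C' = conj_class G y1" using C'in Cs unfolding classes_of_def by auto
    have r: "rp C' \<in> conj_class G y1" using rp_in y1 by simp
    have rc: "rp C' \<in> carrier G" using r ccY[OF y1(1)] Yc by auto
    have "conj_class G (rp C') = conj_class G y1" using class_iff[OF rc Yc[OF y1(1)]] r by simp
    then show ?thesis using class_iff[OF rc Yc[OF y0Y]] y1 by simp
  qed
  define T0 where "T0 = 2 * NN * card Y"
  define L where "L = card Y * (T0 + NN)"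
  define A where "A = {xs. set xs \<subseteq> Y \<and> length xs \<le> L}"
  define S where "S = {(v1, v2). set v1 \<subseteq> Y \<and> set v2 \<subseteq> Y \<and> length v1 \<le> L \<and> length v2 \<le> L \<and> alpha G v1 = alpha G v2}"
  have finS: "finite S"
  proof -
    have "S \<subseteq> A \<times> A" unfolding S_def A_def by auto
    moreover have "finite (A \<times> A)" unfolding A_def using finite_lists_length_le[OF finY] by auto
    ultimately show ?thesis by (rule finite_subset)
  qed
  have "\<forall>p\<in>S. \<exists>b. \<forall>b'\<ge>b. fact_eq G (fst p @ R0 b') (snd p @ R0 b')"
  proof
    fix p assume "p \<in> S"
    then obtain v1 v2 where p: "p = (v1, v2)" "set v1 \<subseteq> Y" "set v2 \<subseteq> Y" "alpha G v1 = alpha G v2"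
      unfolding S_def by auto
    show "\<exists>b. \<forall>b'\<ge>b. fact_eq G (fst p @ R0 b') (snd p @ R0 b')"
      using positive_chain[OF R pe_of[OF p(2-4)] p(2)] p(1) by simp
  qed
  then obtain f where f: "\<forall>p\<in>S. \<forall>b'\<ge>f p. fact_eq G (fst p @ R0 b') (snd p @ R0 b')"
    by metis
  define B where "B = Max (insert 0 (f ` S))"
  have fB: "fact_eq G (v1 @ R0 B) (v2 @ R0 B)" if "(v1, v2) \<in> S" for v1 v2
  proof -
    have "f (v1, v2) \<le> B" unfolding B_def using finS that by (intro Max_ge) auto
    then show ?thesis using f that by force
  qed
  define tsR where "tsR = concat (map (\<lambda>x. replicate B x) ys)"
  define T where "T = T0 + NN * length tsR"
  have tsRY: "set tsR \<subseteq> Y" unfolding tsR_def using ys by auto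
  have PtsR: "concat (map P tsR) = R0 B" unfolding tsR_def R0_def by (rule concat_P_tsR)
  show ?thesis
  proof (intro exI[of _ T] allI impI)
    fix s1 s2
    assume H: "set s1 \<subseteq> Y \<and> set s2 \<subseteq> Y \<and>
           generate G (set s1) = carrier G \<and> generate G (set s2) = carrier G \<and>
           (\<forall>y0 \<in> Y. tau (conj_class G y0) s1 \<ge> T) \<and> alpha G s1 = alpha G s2"
    have s1Y: "set s1 \<subseteq> Y" and s2Y: "set s2 \<subseteq> Y" and g1: "generate G (set s1) = carrier G"
      and g2: "generate G (set s2) = carrier G" and big: "\<forall>y0 \<in> Y. tau (conj_class G y0) s1 \<ge> T"
      and al: "alpha G s1 = alpha G s2" using H by auto
    have taueq: "tau (conj_class G y0) s2 = tau (conj_class G y0) s1" if "y0 \<in> Y" for y0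
    proof -
      have "sig (conj_class G y0) (map (\<lambda>y. (y, True)) s1) = sig (conj_class G y0) (map (\<lambda>y. (y, True)) s2)"
        using sig_inv[OF R pe_of[OF s1Y s2Y al] Yc[OF that]] .
      then show ?thesis by (simp add: sig_pos)
    qed
    define k where "k C = (tau C s1 - T0) div NN" for C
    define tsA where "tsA = concat (map (\<lambda>C. replicate (k C - tau C tsR) (rp C)) Cs)"
    define ts where "ts = tsA @ tsR"
    have tsY: "set ts \<subseteq> Y"
    proof -
      have "set tsA \<subseteq> Y"
      proof
        fix x assume "x \<in> set tsA"
        then obtain C where C: "C \<in> set Cs" "x = rp C" unfolding tsA_def by (auto split: if_splits)
        obtain y1 where "y1 \<in> Y" "C = conj_class G y1" using C Cs unfolding classes_of_def by auto
        then show "x \<in> Y" using rp_in ccY C by auto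
      qed
      then show ?thesis using tsRY ts_def by auto
    qed
    have tau_ts: "tau (conj_class G y0) ts = k (conj_class G y0)" if y0: "y0 \<in> Y" for y0
    proof -
      let ?C = "conj_class G y0"
      have inCs: "?C \<in> set Cs" using Cs y0 unfolding classes_of_def by auto
      have "tau ?C tsA = k ?C - tau ?C tsR"
        unfolding tsA_def using tau_reps[OF Cs(2), of rp ?C] rp_iff[OF _ y0] inCs by simp
      moreover have "tau ?C tsR \<le> k ?C"
      proof -
        have "tau ?C tsR \<le> length tsR" unfolding tau_def by simp
        moreover have "NN * length tsR \<le> tau ?C s1 - T0" using big y0 unfolding T_def by auto
        then have "length tsR \<le> (tau ?C s1 - T0) div NN" using NN_pos
          by (metis div_le_mono nonzero_mult_div_cancel_left not_gr0)
        ultimately show ?thesis unfolding k_def by simp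
      qed
      ultimately show ?thesis unfolding ts_def by simp
    qed
    have ext: "\<exists>u. fact_eq G s (concat (map P ts) @ u) \<and> set u \<subseteq> Y \<and> length u \<le> L \<and>
        alpha G s = alpha G (concat (map P ts) @ u)"
      if sY: "set s \<subseteq> Y" and gs: "generate G (set s) = carrier G"
        and ts_eq: "\<And>y0. y0 \<in> Y \<Longrightarrow> tau (conj_class G y0) s = tau (conj_class G y0) s1" for s
    proof -
      have hyp: "\<forall>y0\<in>Y. tau (conj_class G y0) s \<ge> 2 * NN * card Y + NN * tau (conj_class G y0) ts"
      proof
        fix y0 assume y0: "y0 \<in> Y"
        have "NN * k (conj_class G y0) \<le> tau (conj_class G y0) s1 - T0"
          unfolding k_def by (simp add: mult.commute)
        moreover have "tau (conj_class G y0) s1 \<ge> T0" using big y0 unfolding T_def by auto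
        ultimately show "tau (conj_class G y0) s \<ge> 2 * NN * card Y + NN * tau (conj_class G y0) ts"
          using ts_eq[OF y0] tau_ts[OF y0] unfolding T0_def by simp
      qed
      obtain u where u: "fact_eq G s (concat (map P ts) @ u)" "set u \<subseteq> Y"
         "\<forall>y0\<in>Y. tau (conj_class G y0) u + NN * tau (conj_class G y0) ts = tau (conj_class G y0) s"
         "alpha G s = alpha G (concat (map P ts) @ u)"
        using extractL[OF sY gs tsY hyp] by blast
      have tu: "tau (conj_class G y0) u \<le> T0 + NN" if y0: "y0 \<in> Y" for y0
      proof -
        define x where "x = tau (conj_class G y0) s1 - T0"
        have s1x: "tau (conj_class G y0) s1 = T0 + x" using big y0 unfolding x_def T_def by auto
        have "NN * (x div NN) + x mod NN = x" by simp
        moreover have "x mod NN < NN" using NN_pos by simp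
        moreover have "tau (conj_class G y0) u + NN * (x div NN) = T0 + x"
        proof -
          have e1: "tau (conj_class G y0) u + NN * tau (conj_class G y0) ts = tau (conj_class G y0) s1"
            using bspec[OF u(3) y0] ts_eq[OF y0] by simp
          have e2: "tau (conj_class G y0) ts = x div NN" using tau_ts[OF y0] unfolding k_def x_def by simp
          show ?thesis using e1 e2 s1x by simp
        qed
        ultimately show ?thesis by linarith
      qed
      have "length u = sum (count_list u) Y" using sum_count_set[OF u(2) finY] by simp
      also have "\<dots> \<le> sum (\<lambda>y. tau (conj_class G y) u) Y"
        by (intro sum_mono count_le_tau conj_class_self Yc)
      also have "\<dots> \<le> sum (\<lambda>y. T0 + NN) Y" by (intro sum_mono tu)
      also have "\<dots> = L" unfolding L_def by simp
      finally show ?thesis using u by blast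
    qed
    obtain u1 where u1: "fact_eq G s1 (concat (map P ts) @ u1)" "set u1 \<subseteq> Y" "length u1 \<le> L"
        "alpha G s1 = alpha G (concat (map P ts) @ u1)"
      using ext[OF s1Y g1] by blast
    obtain u2 where u2: "fact_eq G s2 (concat (map P ts) @ u2)" "set u2 \<subseteq> Y" "length u2 \<le> L"
        "alpha G s2 = alpha G (concat (map P ts) @ u2)"
      using ext[OF s2Y g2 taueq] by blast
    have Qc: "set (concat (map P ts)) \<subseteq> carrier G" using tsY Ysub by auto
    have u1c: "set u1 \<subseteq> carrier G" and u2c: "set u2 \<subseteq> carrier G" using u1 u2 Ysub by auto
    have "alpha G (concat (map P ts)) \<otimes> alpha G u1 = alpha G (concat (map P ts)) \<otimes> alpha G u2"
      using u1(4) u2(4) al Qc u1c u2c by (simp add: alpha_append)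
    then have "alpha G u1 = alpha G u2"
      using alpha_closed[OF Qc] alpha_closed[OF u1c] alpha_closed[OF u2c] by (metis gc2)
    then have S12: "(u1, u2) \<in> S" unfolding S_def using u1 u2 by auto
    define Aq where "Aq = concat (map P tsA)"
    have Q: "concat (map P ts) = Aq @ R0 B" unfolding ts_def Aq_def using PtsR by simp
    have c1: "fact_eq G (Aq @ R0 B @ u1) (Aq @ u1 @ R0 B)"
      using fe_app_left[OF hs_fe[OF R0_central[OF u1(2)]]] by simp
    have c2: "fact_eq G (Aq @ u1 @ R0 B) (Aq @ u2 @ R0 B)"
      using fe_app_left[OF fB[OF S12]] by simp
    have c3: "fact_eq G (Aq @ u2 @ R0 B) (Aq @ R0 B @ u2)"
      using fe_app_left[OF fe_sym[OF hs_fe[OF R0_central[OF u2(2)]]]] by simp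
    have "fact_eq G s1 (Aq @ R0 B @ u1)" using u1(1) Q by simp
    moreover have "fact_eq G (Aq @ R0 B @ u2) s2" using fe_sym[OF u2(1)] Q by simp
    ultimately show "fact_eq G s1 s2" using c1 c2 c3 by (meson fe_trans)
  qed
qed

end


lemma word_eval_gen:
  assumes "group G" "w \<in> lists (Y \<times> UNIV)"
  shows "word_eval G w \<in> generate G Y"
  using assms(2)
proof (induction w)
  case Nil then show ?case by (simp add: word_eval_def generate.one)
next
  case (Cons p w)
  obtain y e where p: "p = (y, e)" by (cases p)
  have y: "y \<in> Y" using Cons p by auto
  have "word_eval G (p # w) = (if e then y else inv\<^bsub>G\<^esub> y) \<otimes>\<^bsub>G\<^esub> word_eval G w"
    by (simp add: word_eval_def p)
  moreover have "(if e then y else inv\<^bsub>G\<^esub> y) \<in> generate G Y"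
    using y by (auto intro: generate.incl generate.inv)
  ultimately show ?case using Cons by (auto intro: generate.eng)
qed

theorem theorem4p1:
  fixes G :: "('a, 'b) monoid_scheme" and Y :: "'a set"
  assumes "finite_C_group G Y"
  shows "\<exists>T :: nat. \<forall>s1 s2.
           s1 \<in> lists Y \<and> s2 \<in> lists Y \<and>
           G_sub G s1 = carrier G \<and> G_sub G s2 = carrier G \<and>
           (\<forall>C \<in> classes_of G Y. tau C s1 \<ge> T) \<and>
           alpha G s1 = alpha G s2
           \<longrightarrow> fact_eq G s1 s2"
proof -
  have grp: "group G" and Ysub: "Y \<subseteq> carrier G" and finY: "finite Y"
    and Yconj: "\<forall>g \<in> carrier G. \<forall>y \<in> Y. inv\<^bsub>G\<^esub> g \<otimes>\<^bsub>G\<^esub> y \<otimes>\<^bsub>G\<^esub> g \<in> Y"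
    using assms unfolding finite_C_group_def by auto
  obtain R where R: "R \<subseteq> {(y, y', z). y \<in> Y \<and> y' \<in> Y \<and> z \<in> Y \<and>
                              inv\<^bsub>G\<^esub> z \<otimes>\<^bsub>G\<^esub> y \<otimes>\<^bsub>G\<^esub> z = y'}"
    and pres: "presents G Y R"
    using assms unfolding finite_C_group_def by blast
  have Ygen: "generate G Y = carrier G"
  proof
    show "generate G Y \<subseteq> carrier G" using group.generate_incl[OF grp Ysub] .
    show "carrier G \<subseteq> generate G Y"
    proof
      fix g assume "g \<in> carrier G"
      then obtain w where "w \<in> lists (Y \<times> UNIV)" "word_eval G w = g"
        using pres unfolding presents_def by blast
      then show "g \<in> generate G Y" using word_eval_gen[OF grp] by blast
    qed
  qed
  interpret cgrp G Y
    by (rule cgrp.intro[OF grp]) (unfold_locales, use Ysub finY Yconj Ygen in auto)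
  obtain T where T: "\<forall>s1 s2.
           set s1 \<subseteq> Y \<and> set s2 \<subseteq> Y \<and>
           generate G (set s1) = carrier G \<and> generate G (set s2) = carrier G \<and>
           (\<forall>y0 \<in> Y. tau (conj_class G y0) s1 \<ge> T) \<and>
           alpha G s1 = alpha G s2
           \<longrightarrow> fact_eq G s1 s2"
    using main[OF R pres] by blast
  show ?thesis
  proof (intro exI[of _ T] allI impI)
    fix s1 s2
    assume H: "s1 \<in> lists Y \<and> s2 \<in> lists Y \<and>
           G_sub G s1 = carrier G \<and> G_sub G s2 = carrier G \<and>
           (\<forall>C \<in> classes_of G Y. tau C s1 \<ge> T) \<and>
           alpha G s1 = alpha G s2"
    then show "fact_eq G s1 s2"
      using T unfolding G_sub_def classes_of_def by (auto simp: lists_eq_set)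
  qed
qed

end
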